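(* Let $A,B$ be real symmetric $n\times n$ matrices with spectral decompositions $A=\sum_i\lambda_iv_iv_i^\top$ and $B=\sum_j\mu_jw_jw_j^\top$, suppose $\|A\|\le2.5$, and let $\eta>0$. Then the matrix $X=\sum_{i,j}\frac{\eta}{(\lambda_i-\mu_j)^2+\eta^2}v_iv_i^\top\mathbf Jw_jw_j^\top$ satisfies $$X=\frac1{2\pi}\operatorname{Re}\oint_\Gamma R_A(z)\mathbf JR_B(z+\mathbf i\eta)\,dz,$$ where $\Gamma$ is the boundary of the rectangle with vertices $\pm3\pm\mathbf i\eta/2$, traversed counterclockwise.
   Context: $\mathbf J$ is the $n\times n$ all-ones matrix, $\|\cdot\|$ the spectral norm, $\mathbf i=\sqrt{-1}$. For a real symmetric matrix $M$ and $z\in\mathbb C$ not an eigenvalue of $M$, $R_M(z)=(M-z\mathbf I)^{-1}$ is the resolvent. The real part and the integral are taken entrywise. *)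

theory Defs
  imports "HOL-Complex_Analysis.Complex_Analysis"
begin

definition outer :: "real^'n \<Rightarrow> real^'n \<Rightarrow> real^'n^'n" where
  "outer u w = (\<chi> a b. u $ a * w $ b)"

definition onesM :: "'a::one^'n^'n" where
  "onesM = (\<chi> a b. 1)"

definition cmat :: "real^'n^'n \<Rightarrow> complex^'n^'n" where
  "cmat M = (\<chi> a b. complex_of_real (M $ a $ b))"

definition resolvent :: "real^'n^'n \<Rightarrow> complex \<Rightarrow> complex^'n^'n" where
  "resolvent M z = matrix_inv (cmat M - mat z)"

definition rect_contour :: "real \<Rightarrow> real \<Rightarrow> complex" where
  "rect_contour eta =
     linepath (Complex 3 (-eta/2)) (Complex 3 (eta/2)) +++
     linepath (Complex 3 (eta/2)) (Complex (-3) (eta/2)) +++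
     linepath (Complex (-3) (eta/2)) (Complex (-3) (-eta/2)) +++
     linepath (Complex (-3) (-eta/2)) (Complex 3 (-eta/2))"

end

theory Submission
  imports Defs
begin

lemma rect_contour_eq:
  assumes eta: "eta > 0" and f: "f contour_integrable_on rectpath (Complex (-3) (-eta/2)) (Complex 3 (eta/2))"
  shows "contour_integral (rect_contour eta) f = contour_integral (rectpath (Complex (-3) (-eta/2)) (Complex 3 (eta/2))) f"
    and "f contour_integrable_on rect_contour eta"
proof -
  define l1 where "l1 = linepath (Complex (-3) (-eta/2)) (Complex 3 (-eta/2))"
  define l2 where "l2 = linepath (Complex 3 (-eta/2)) (Complex 3 (eta/2))"
  define l3 where "l3 = linepath (Complex 3 (eta/2)) (Complex (-3) (eta/2))"
  define l4 where "l4 = linepath (Complex (-3) (eta/2)) (Complex (-3) (-eta/2))"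
  have r: "rectpath (Complex (-3) (-eta/2)) (Complex 3 (eta/2)) = l1 +++ l2 +++ l3 +++ l4"
    by (simp add: rectpath_def Let_def l1_def l2_def l3_def l4_def)
  have c: "rect_contour eta = l2 +++ l3 +++ l4 +++ l1"
    by (simp add: rect_contour_def l1_def l2_def l3_def l4_def)
  have v: "valid_path l1" "valid_path l2" "valid_path l3" "valid_path l4"
    by (simp_all add: l1_def l2_def l3_def l4_def)
  have i: "f contour_integrable_on l1" "f contour_integrable_on l2" "f contour_integrable_on l3" "f contour_integrable_on l4"
    using f v unfolding r l1_def l2_def l3_def l4_def by auto
  show "contour_integral (rect_contour eta) f = contour_integral (rectpath (Complex (-3) (-eta/2)) (Complex 3 (eta/2))) f" unfolding r c using i v by (simp add: l1_def l2_def l3_def l4_def)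
  show "f contour_integrable_on rect_contour eta" unfolding c using i v by (simp add: l1_def l2_def l3_def l4_def)
qed

lemma key:
  fixes lam mu eta :: real
  assumes lam: "\<bar>lam\<bar> < 3" and eta: "eta > 0"
  shows "((\<lambda>z. 1 / (complex_of_real lam - z) * (1 / (complex_of_real mu - (z + \<i> * complex_of_real eta))))
          has_contour_integral (2 * pi * \<i> / (complex_of_real (lam - mu) + \<i> * complex_of_real eta))) (rect_contour eta)"
proof -
  define a1 where "a1 = Complex (-3) (-eta/2)"
  define a3 where "a3 = Complex 3 (eta/2)"
  define b where "b = complex_of_real mu - \<i> * complex_of_real eta"
  define S where "S = {x. Im x > - (3/4) * eta}"
  have cS: "convex S" unfolding S_def by (rule convex_halfspace_Im_gt)
  have oS: "open S" unfolding S_def by (rule open_halfspace_Im_gt)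
  have bS: "b \<notin> S" using eta by (simp add: S_def b_def)
  have hol: "(\<lambda>w. 1 / (w - b)) holomorphic_on S"
    using bS by (auto intro!: holomorphic_intros)
  have lbox: "complex_of_real lam \<in> box a1 a3"
    using lam eta by (auto simp: a1_def a3_def in_box_complex_iff)
  have pimg: "path_image (rectpath a1 a3) = cbox a1 a3 - box a1 a3"
    using eta by (intro path_image_rectpath_cbox_minus_box) (auto simp: a1_def a3_def)
  have cbS: "cbox a1 a3 \<subseteq> S"
    using eta by (auto simp: a1_def a3_def in_cbox_complex_iff S_def)
  have lS: "complex_of_real lam \<in> interior S"
    using oS eta by (simp add: interior_open S_def)
  have "((\<lambda>w. 1 / (w - b) / (w - complex_of_real lam)) has_contour_integral
         (2*pi * \<i> * winding_number (rectpath a1 a3) (complex_of_real lam) * (1 / (complex_of_real lam - b)))) (rectpath a1 a3)"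
    apply (rule Cauchy_integral_formula_convex_simple[OF cS hol lS])
    using pimg cbS lbox by auto
  then have H: "((\<lambda>w. 1 / (w - b) / (w - complex_of_real lam)) has_contour_integral
         (2*pi * \<i> / (complex_of_real lam - b))) (rectpath a1 a3)"
    using winding_number_rectpath[OF lbox] by simp
  have fe: "(\<lambda>z. 1 / (complex_of_real lam - z) * (1 / (complex_of_real mu - (z + \<i> * complex_of_real eta))))
      = (\<lambda>w. 1 / (w - b) / (w - complex_of_real lam))"
  proof
    fix z
    have "complex_of_real lam - z = - (z - complex_of_real lam)" "complex_of_real mu - (z + \<i> * complex_of_real eta) = - (z - b)"
      by (simp_all add: b_def)
    then have "1 / (complex_of_real lam - z) * (1 / (complex_of_real mu - (z + \<i> * complex_of_real eta))) = 1 / (-(z - complex_of_real lam)) * (1 / (-(z - b)))"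
      by simp
    also have "\<dots> = 1 / (z - b) / (z - complex_of_real lam)"
      by (simp only: divide_inverse inverse_minus_eq mult_1_left minus_mult_minus mult.commute)
    finally show "1 / (complex_of_real lam - z) * (1 / (complex_of_real mu - (z + \<i> * complex_of_real eta))) = 1 / (z - b) / (z - complex_of_real lam)" .
  qed
  have ci: "contour_integral (rect_contour eta) (\<lambda>w. 1 / (w - b) / (w - complex_of_real lam)) = 2*pi * \<i> / (complex_of_real lam - b)"
    using rect_contour_eq[OF eta, of "\<lambda>w. 1 / (w - b) / (w - complex_of_real lam)"] H
    unfolding a1_def a3_def by (auto simp: contour_integral_unique contour_integrable_on_def)
  have "(\<lambda>w. 1 / (w - b) / (w - complex_of_real lam)) contour_integrable_on (rect_contour eta)"
    using rect_contour_eq(2)[OF eta, of "\<lambda>w. 1 / (w - b) / (w - complex_of_real lam)"] H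
    unfolding a1_def a3_def by (auto simp: contour_integrable_on_def)
  moreover have "complex_of_real lam - b = complex_of_real (lam - mu) + \<i> * complex_of_real eta"
    by (simp add: b_def)
  ultimately show ?thesis unfolding fe using ci
    by (metis has_contour_integral_integral)
qed

lemma complete_orth:
  fixes v :: "'n::finite \<Rightarrow> real^'n"
  assumes orth: "\<And>i j. v i \<bullet> v j = (if i = j then 1 else 0)"
  shows "(\<Sum>i\<in>UNIV. v i $ a * v i $ b) = (if a = b then 1 else 0)"
proof -
  define V :: "real^'n^'n" where "V = (\<chi> i c. v i $ c)"
  have "V ** transpose V = mat 1"
    using orth by (simp add: V_def matrix_matrix_mult_def transpose_def mat_def vec_eq_iff inner_vec_def)
  then have "transpose V ** V = mat 1" by (simp add: matrix_left_right_inverse)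
  then have "(transpose V ** V) $ a $ b = mat 1 $ a $ b" by simp
  then show ?thesis by (simp add: V_def matrix_matrix_mult_def transpose_def mat_def)
qed

lemma sum_delta_mult:
  fixes f :: "'n::finite \<Rightarrow> 'a::comm_ring_1"
  shows "(\<Sum>k\<in>UNIV. f k * (if i = k then 1 else 0)) = f i"
proof -
  have "(\<Sum>k\<in>UNIV. f k * (if i = k then 1 else 0)) = (\<Sum>k\<in>UNIV. if i = k then f k else 0)"
    by (rule sum.cong) auto
  then show ?thesis by simp
qed

definition CM :: "('n::finite \<Rightarrow> complex) \<Rightarrow> ('n \<Rightarrow> real^'n) \<Rightarrow> complex^'n^'n" where
  "CM \<alpha> u = (\<chi> a b. \<Sum>i\<in>UNIV. \<alpha> i * complex_of_real (u i $ a) * complex_of_real (u i $ b))"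

lemma CM_mult:
  fixes v :: "'n::finite \<Rightarrow> real^'n"
  assumes orth: "\<And>i j. v i \<bullet> v j = (if i = j then 1 else 0)"
  shows "CM \<alpha> v ** CM \<beta> v = CM (\<lambda>i. \<alpha> i * \<beta> i) v"
proof -
  have o: "(\<Sum>c\<in>UNIV. complex_of_real (v i $ c) * complex_of_real (v k $ c)) = (if i = k then 1 else 0)" for i k
  proof -
    have "(\<Sum>c\<in>UNIV. complex_of_real (v i $ c) * complex_of_real (v k $ c)) = complex_of_real (v i \<bullet> v k)"
      by (simp add: inner_vec_def)
    then show ?thesis using orth by simp
  qed
  show ?thesis
  proof (simp add: vec_eq_iff, intro allI)
    fix a b
    have "(CM \<alpha> v ** CM \<beta> v) $ a $ b = (\<Sum>c\<in>UNIV. (\<Sum>i\<in>UNIV. \<alpha> i * complex_of_real (v i $ a) * complex_of_real (v i $ c)) * (\<Sum>k\<in>UNIV. \<beta> k * complex_of_real (v k $ c) * complex_of_real (v k $ b)))"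
      by (simp add: CM_def matrix_matrix_mult_def)
    also have "\<dots> = (\<Sum>i\<in>UNIV. \<Sum>k\<in>UNIV. \<alpha> i * \<beta> k * complex_of_real (v i $ a) * complex_of_real (v k $ b) * (\<Sum>c\<in>UNIV. complex_of_real (v i $ c) * complex_of_real (v k $ c)))"
    proof -
      have "(\<Sum>c\<in>UNIV. (\<Sum>i\<in>UNIV. \<alpha> i * complex_of_real (v i $ a) * complex_of_real (v i $ c)) * (\<Sum>k\<in>UNIV. \<beta> k * complex_of_real (v k $ c) * complex_of_real (v k $ b)))
        = (\<Sum>c\<in>UNIV. \<Sum>i\<in>UNIV. \<Sum>k\<in>UNIV. \<alpha> i * \<beta> k * complex_of_real (v i $ a) * complex_of_real (v k $ b) * (complex_of_real (v i $ c) * complex_of_real (v k $ c)))"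
        by (simp add: sum_product mult_ac)
      also have "\<dots> = (\<Sum>i\<in>UNIV. \<Sum>c\<in>UNIV. \<Sum>k\<in>UNIV. \<alpha> i * \<beta> k * complex_of_real (v i $ a) * complex_of_real (v k $ b) * (complex_of_real (v i $ c) * complex_of_real (v k $ c)))"
        by (rule sum.swap)
      also have "\<dots> = (\<Sum>i\<in>UNIV. \<Sum>k\<in>UNIV. \<Sum>c\<in>UNIV. \<alpha> i * \<beta> k * complex_of_real (v i $ a) * complex_of_real (v k $ b) * (complex_of_real (v i $ c) * complex_of_real (v k $ c)))"
        by (rule sum.cong[OF refl], rule sum.swap)
      also have "\<dots> = (\<Sum>i\<in>UNIV. \<Sum>k\<in>UNIV. \<alpha> i * \<beta> k * complex_of_real (v i $ a) * complex_of_real (v k $ b) * (\<Sum>c\<in>UNIV. complex_of_real (v i $ c) * complex_of_real (v k $ c)))"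
        by (simp only: sum_distrib_left)
      finally show ?thesis .
    qed
    also have "\<dots> = (\<Sum>i\<in>UNIV. \<alpha> i * \<beta> i * complex_of_real (v i $ a) * complex_of_real (v i $ b))"
      by (simp add: o sum_delta_mult)
    also have "\<dots> = CM (\<lambda>i. \<alpha> i * \<beta> i) v $ a $ b" by (simp add: CM_def)
    finally show "(CM \<alpha> v ** CM \<beta> v) $ a $ b = CM (\<lambda>i. \<alpha> i * \<beta> i) v $ a $ b" .
  qed
qed

lemma CM_one:
  fixes v :: "'n::finite \<Rightarrow> real^'n"
  assumes orth: "\<And>i j. v i \<bullet> v j = (if i = j then 1 else 0)"
  shows "CM (\<lambda>i. 1) v = mat 1"
proof -
  have "(\<Sum>i\<in>UNIV. complex_of_real (v i $ a) * complex_of_real (v i $ b)) = (if a = b then 1 else 0)" for a b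
  proof -
    have "(\<Sum>i\<in>UNIV. complex_of_real (v i $ a) * complex_of_real (v i $ b)) = complex_of_real (\<Sum>i\<in>UNIV. v i $ a * v i $ b)"
      by simp
    then show ?thesis using complete_orth[OF orth] by simp
  qed
  then show ?thesis by (simp add: CM_def vec_eq_iff mat_def)
qed

lemma matrix_inv_eq:
  fixes M R :: "'a::field^'n^'n"
  assumes "M ** R = mat 1"
  shows "matrix_inv M = R"
proof -
  have RM: "R ** M = mat 1" using assms by (simp add: matrix_left_right_inverse)
  have "\<exists>A'. M ** A' = mat 1 \<and> A' ** M = mat 1" using assms RM by blast
  then have s: "M ** matrix_inv M = mat 1 \<and> matrix_inv M ** M = mat 1"
    unfolding matrix_inv_def by (rule someI_ex)
  have "matrix_inv M = matrix_inv M ** (M ** R)" using assms by simp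
  also have "\<dots> = (matrix_inv M ** M) ** R" by (simp add: matrix_mul_assoc)
  also have "\<dots> = R" using s by simp
  finally show ?thesis .
qed

lemma dec_entry:
  fixes v :: "'n::finite \<Rightarrow> real^'n"
  assumes "A = (\<Sum>i\<in>UNIV. lam i *\<^sub>R outer (v i) (v i))"
  shows "A $ a $ c = (\<Sum>i\<in>UNIV. lam i * v i $ a * v i $ c)"
  using assms by (simp add: sum_component outer_def mult.assoc)

lemma resolvent_CM:
  fixes v :: "'n::finite \<Rightarrow> real^'n"
  assumes orth: "\<And>i j. v i \<bullet> v j = (if i = j then 1 else 0)"
    and dec: "A = (\<Sum>i\<in>UNIV. lam i *\<^sub>R outer (v i) (v i))"
    and nz: "\<And>i. complex_of_real (lam i) \<noteq> z"
  shows "resolvent A z = CM (\<lambda>i. 1 / (complex_of_real (lam i) - z)) v"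
proof -
  have "cmat A = CM (\<lambda>i. complex_of_real (lam i)) v"
    by (simp add: cmat_def CM_def vec_eq_iff dec_entry[OF dec])
  moreover have "mat z = CM (\<lambda>i. z) v"
  proof -
    have "CM (\<lambda>i. z) v = (\<chi> a b. z * CM (\<lambda>i. 1) v $ a $ b)"
      by (simp add: CM_def vec_eq_iff sum_distrib_left mult.assoc)
    also have "\<dots> = mat z" using CM_one[OF orth] by (simp add: vec_eq_iff mat_def)
    finally show ?thesis by simp
  qed
  ultimately have e: "cmat A - mat z = CM (\<lambda>i. complex_of_real (lam i) - z) v"
    by (simp add: CM_def vec_eq_iff sum_subtractf algebra_simps)
  have "(cmat A - mat z) ** CM (\<lambda>i. 1 / (complex_of_real (lam i) - z)) v = mat 1"
    unfolding e CM_mult[OF orth] using nz CM_one[OF orth] by simp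
  then show ?thesis unfolding resolvent_def by (rule matrix_inv_eq)
qed

lemma CM_J_CM:
  fixes v w :: "'n::finite \<Rightarrow> real^'n"
  shows "(CM \<alpha> v ** onesM ** CM \<beta> w) $ a $ b =
    (\<Sum>i\<in>UNIV. \<Sum>j\<in>UNIV. \<alpha> i * \<beta> j * complex_of_real ((outer (v i) (v i) ** onesM ** outer (w j) (w j)) $ a $ b))"
proof -
  define p where "p i = (\<Sum>c\<in>UNIV. v i $ c)" for i
  define q where "q j = (\<Sum>d\<in>UNIV. w j $ d)" for j
  have o1: "(outer (v i) (v i) ** onesM ** outer (w j) (w j)) $ a $ b = v i $ a * p i * q j * w j $ b" for i j
  proof -
    define X where "X = outer (v i) (v i) ** (onesM::real^'n^'n)"
    have X: "X $ a $ d = v i $ a * p i" for d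
      by (simp add: X_def matrix_matrix_mult_def outer_def onesM_def p_def sum_distrib_left)
    have "(X ** outer (w j) (w j)) $ a $ b = v i $ a * p i * q j * w j $ b"
      by (simp add: matrix_matrix_mult_def outer_def X q_def sum_distrib_left sum_distrib_right mult_ac)
    then show ?thesis by (simp add: X_def)
  qed
  have l1: "(CM \<alpha> v ** (onesM::complex^'n^'n)) $ a $ d = (\<Sum>i\<in>UNIV. \<alpha> i * complex_of_real (v i $ a) * complex_of_real (p i))" for d
  proof -
    have "(CM \<alpha> v ** (onesM::complex^'n^'n)) $ a $ d = (\<Sum>c\<in>UNIV. \<Sum>i\<in>UNIV. \<alpha> i * complex_of_real (v i $ a) * complex_of_real (v i $ c))"
      by (simp add: matrix_matrix_mult_def onesM_def CM_def)
    also have "\<dots> = (\<Sum>i\<in>UNIV. \<Sum>c\<in>UNIV. \<alpha> i * complex_of_real (v i $ a) * complex_of_real (v i $ c))"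
      by (rule sum.swap)
    also have "\<dots> = (\<Sum>i\<in>UNIV. \<alpha> i * complex_of_real (v i $ a) * complex_of_real (p i))"
      by (simp add: p_def sum_distrib_left)
    finally show ?thesis .
  qed
  have "(CM \<alpha> v ** onesM ** CM \<beta> w) $ a $ b = (\<Sum>d\<in>UNIV. (\<Sum>i\<in>UNIV. \<alpha> i * complex_of_real (v i $ a) * complex_of_real (p i)) * (\<Sum>j\<in>UNIV. \<beta> j * complex_of_real (w j $ d) * complex_of_real (w j $ b)))"
    using l1 by (simp add: matrix_matrix_mult_def CM_def)
  also have "\<dots> = (\<Sum>i\<in>UNIV. \<alpha> i * complex_of_real (v i $ a) * complex_of_real (p i)) * (\<Sum>d\<in>UNIV. \<Sum>j\<in>UNIV. \<beta> j * complex_of_real (w j $ d) * complex_of_real (w j $ b))"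
    by (simp add: sum_distrib_left)
  also have "(\<Sum>d\<in>UNIV. \<Sum>j\<in>UNIV. \<beta> j * complex_of_real (w j $ d) * complex_of_real (w j $ b)) = (\<Sum>j\<in>UNIV. \<Sum>d\<in>UNIV. \<beta> j * complex_of_real (w j $ d) * complex_of_real (w j $ b))"
    by (rule sum.swap)
  also have "\<dots> = (\<Sum>j\<in>UNIV. \<beta> j * complex_of_real (q j) * complex_of_real (w j $ b))"
    by (simp add: q_def sum_distrib_left sum_distrib_right)
  also have "(\<Sum>i\<in>UNIV. \<alpha> i * complex_of_real (v i $ a) * complex_of_real (p i)) * \<dots> = (\<Sum>i\<in>UNIV. \<Sum>j\<in>UNIV. \<alpha> i * \<beta> j * complex_of_real (v i $ a * p i * q j * w j $ b))"
    by (simp add: sum_product mult_ac)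
  finally show ?thesis by (simp add: o1)
qed


lemma Re_key: "Re (2 * pi * \<i> / (complex_of_real x + \<i> * complex_of_real e)) = 2 * pi * e / (x\<^sup>2 + e\<^sup>2)"
  by (simp add: Re_divide power2_eq_square)

lemma Re_key2: "Re (2 * pi * \<i> / (complex_of_real x + \<i> * complex_of_real e) * complex_of_real k) = 2 * pi * e / (x\<^sup>2 + e\<^sup>2) * k"
proof -
  have Re_mult_ofr: "\<And>z. Re (z * complex_of_real k) = Re z * k" by simp
  have "Re (2 * pi * \<i> / (complex_of_real x + \<i> * complex_of_real e) * complex_of_real k) = Re (2 * pi * \<i> / (complex_of_real x + \<i> * complex_of_real e)) * k"
    using Re_mult_ofr by blast
  then show ?thesis by (simp only: Re_key)
qed

lemma eig_bound:
  fixes A :: "real^'n::finite^'n" and v :: "'n \<Rightarrow> real^'n"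
  assumes orth: "\<And>i j. v i \<bullet> v j = (if i = j then 1 else 0)"
    and dec: "A = (\<Sum>i\<in>UNIV. lam i *\<^sub>R outer (v i) (v i))"
    and normA: "onorm (\<lambda>x. A *v x) \<le> 2.5"
  shows "\<bar>lam k\<bar> \<le> 2.5"
proof -
  have Av: "A *v v k = lam k *\<^sub>R v k"
  proof (simp add: vec_eq_iff, intro allI)
    fix a
    have "(A *v v k) $ a = (\<Sum>c\<in>UNIV. \<Sum>i\<in>UNIV. lam i * v i $ a * (v i $ c * v k $ c))"
      by (simp add: matrix_vector_mult_def dec_entry[OF dec] sum_distrib_left sum_distrib_right mult_ac)
    also have "\<dots> = (\<Sum>i\<in>UNIV. \<Sum>c\<in>UNIV. lam i * v i $ a * (v i $ c * v k $ c))"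
      by (rule sum.swap)
    also have "\<dots> = (\<Sum>i\<in>UNIV. lam i * v i $ a * (v i \<bullet> v k))"
      by (simp add: inner_vec_def sum_distrib_left)
    also have "\<dots> = lam k * v k $ a"
      using orth sum_delta_mult[of "\<lambda>i. lam i * v i $ a" k]
      by (simp add: eq_commute[of k])
    finally show "(A *v v k) $ a = lam k * v k $ a" .
  qed
  have nv: "norm (v k) = 1" using orth[of k k] by (simp add: norm_eq_sqrt_inner)
  have "norm (A *v v k) \<le> onorm (\<lambda>x. A *v x) * norm (v k)"
    by (rule onorm) simp
  then show ?thesis using Av nv normA by simp
qed

theorem proposition3p2:
  fixes A B :: "real^'n^'n" and lam mu :: "'n \<Rightarrow> real"
    and v w :: "'n \<Rightarrow> real^'n" and eta :: real
  assumes symA: "transpose A = A" and symB: "transpose B = B"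
    and v_orth: "\<And>i j. v i \<bullet> v j = (if i = j then 1 else 0)"
    and w_orth: "\<And>i j. w i \<bullet> w j = (if i = j then 1 else 0)"
    and A_dec: "A = (\<Sum>i\<in>UNIV. lam i *\<^sub>R outer (v i) (v i))"
    and B_dec: "B = (\<Sum>j\<in>UNIV. mu j *\<^sub>R outer (w j) (w j))"
    and normA: "onorm (\<lambda>x. A *v x) \<le> 2.5"
    and eta_pos: "eta > 0"
  shows "(\<Sum>i\<in>UNIV. \<Sum>j\<in>UNIV.
            (eta / ((lam i - mu j)\<^sup>2 + eta\<^sup>2)) *\<^sub>R
              (outer (v i) (v i) ** onesM ** outer (w j) (w j)))
         = (1 / (2 * pi)) *\<^sub>R
           (\<chi> a b. Re (contour_integral (rect_contour eta)
              (\<lambda>z. (resolvent A z ** onesM ** resolvent B (z + \<i> * complex_of_real eta)) $ a $ b)))"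
proof -
  define K where "K i j a b = (outer (v i) (v i) ** onesM ** outer (w j) (w j)) $ a $ b" for i j a b
  define a1 where "a1 = Complex (-3) (-eta/2)"
  define a3 where "a3 = Complex 3 (eta/2)"
  have lamb: "\<bar>lam i\<bar> < 3" for i using eig_bound[OF v_orth A_dec normA, of i] by simp
  have pimg: "path_image (rect_contour eta) = cbox a1 a3 - box a1 a3"
  proof -
    have "path_image (rect_contour eta) = path_image (rectpath a1 a3)"
      by (auto simp: rect_contour_def rectpath_def Let_def path_image_join a1_def a3_def)
    also have "\<dots> = cbox a1 a3 - box a1 a3"
      using eta_pos by (intro path_image_rectpath_cbox_minus_box) (auto simp: a1_def a3_def)
    finally show ?thesis .
  qed
  have onpath: "complex_of_real (lam i) \<noteq> z \<and> complex_of_real (mu j) \<noteq> z + \<i> * complex_of_real eta"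
    if "z \<in> path_image (rect_contour eta)" for z i j
  proof
    show "complex_of_real (lam i) \<noteq> z"
    proof
      assume "complex_of_real (lam i) = z"
      then have "z \<in> box a1 a3" using lamb[of i] eta_pos by (auto simp: a1_def a3_def in_box_complex_iff)
      then show False using that pimg by auto
    qed
    have "Im z \<ge> - eta / 2" using that pimg by (auto simp: a1_def a3_def in_cbox_complex_iff)
    then have "Im (z + \<i> * complex_of_real eta) > 0" using eta_pos by simp
    then show "complex_of_real (mu j) \<noteq> z + \<i> * complex_of_real eta"
      by (metis Im_complex_of_real less_irrefl)
  qed
  have integrand: "(resolvent A z ** onesM ** resolvent B (z + \<i> * complex_of_real eta)) $ a $ b
     = (\<Sum>i\<in>UNIV. \<Sum>j\<in>UNIV. 1 / (complex_of_real (lam i) - z) * (1 / (complex_of_real (mu j) - (z + \<i> * complex_of_real eta))) * complex_of_real (K i j a b))"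
    if "z \<in> path_image (rect_contour eta)" for z a b
  proof -
    have r1: "resolvent A z = CM (\<lambda>i. 1 / (complex_of_real (lam i) - z)) v"
      using onpath[OF that] by (intro resolvent_CM[OF v_orth A_dec]) blast
    have r2: "resolvent B (z + \<i> * complex_of_real eta) = CM (\<lambda>i. 1 / (complex_of_real (mu i) - (z + \<i> * complex_of_real eta))) w"
      using onpath[OF that] by (intro resolvent_CM[OF w_orth B_dec]) blast
    show ?thesis unfolding r1 r2 CM_J_CM K_def by (rule refl)
  qed
  have hci: "((\<lambda>z. (resolvent A z ** onesM ** resolvent B (z + \<i> * complex_of_real eta)) $ a $ b) has_contour_integral
      (\<Sum>i\<in>UNIV. \<Sum>j\<in>UNIV. 2 * pi * \<i> / (complex_of_real (lam i - mu j) + \<i> * complex_of_real eta) * complex_of_real (K i j a b))) (rect_contour eta)" for a b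
  proof (rule has_contour_integral_eq[OF _ integrand[symmetric]])
    show "((\<lambda>z. \<Sum>i\<in>UNIV. \<Sum>j\<in>UNIV. 1 / (complex_of_real (lam i) - z) * (1 / (complex_of_real (mu j) - (z + \<i> * complex_of_real eta))) * complex_of_real (K i j a b)) has_contour_integral
      (\<Sum>i\<in>UNIV. \<Sum>j\<in>UNIV. 2 * pi * \<i> / (complex_of_real (lam i - mu j) + \<i> * complex_of_real eta) * complex_of_real (K i j a b))) (rect_contour eta)"
      by (intro has_contour_integral_sum has_contour_integral_rmul key lamb eta_pos) simp_all
  qed
  show ?thesis
  proof (subst vec_eq_iff, intro allI, subst vec_eq_iff, intro allI)
    fix a b
    have "Re (contour_integral (rect_contour eta) (\<lambda>z. (resolvent A z ** onesM ** resolvent B (z + \<i> * complex_of_real eta)) $ a $ b))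
        = (\<Sum>i\<in>UNIV. \<Sum>j\<in>UNIV. 2 * pi * eta / ((lam i - mu j)\<^sup>2 + eta\<^sup>2) * K i j a b)"
      by (simp only: contour_integral_unique[OF hci] Re_sum Re_key2 mult.commute[of _ "K _ _ a b"] times_divide_eq_right mult.assoc)
    then show "(\<Sum>i\<in>UNIV. \<Sum>j\<in>UNIV. (eta / ((lam i - mu j)\<^sup>2 + eta\<^sup>2)) *\<^sub>R
              (outer (v i) (v i) ** onesM ** outer (w j) (w j))) $ a $ b
         = ((1 / (2 * pi)) *\<^sub>R
           (\<chi> a b. Re (contour_integral (rect_contour eta)
              (\<lambda>z. (resolvent A z ** onesM ** resolvent B (z + \<i> * complex_of_real eta)) $ a $ b)))) $ a $ b"
      by (simp add: sum_component K_def sum_divide_distrib)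
  qed
qed

end
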